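(* Let $G$ be a group acting on posets $P$ and $Q$ by order-preserving bijections, and let $\varphi:P\to Q$ be an order-preserving $G$-map (i.e. $\varphi(gx)=g\varphi(x)$ for all $g\in G$, $x\in P$). Let $R\subset Q$ be a subset containing exactly one representative of each $G$-orbit of $Q$. Assume that for each $r\in R$ we are given a $G_r$-equivariant acyclic matching $M_r$ on the subposet $\varphi^{-1}(r)$ (on which the stabilizer $G_r=\{g\in G\mid gr=r\}$ acts), and let $C_r$ denote the set of critical elements of $M_r$. Then there exists a $G$-equivariant acyclic matching on $P$ whose set of critical elements is \[\bigcup_{g\in G,\ r\in R} gC_r .\] Moreover, if $r\in R$ is such that $G_r$ acts transitively on $C_r$, then $G$ acts transitively on $\bigcup_{g\in G} gC_r$.
   Context: For a poset $P$, a partial matching is a set $M$ of pairs $(a,b)$ of elements of $P$ such that $b$ covers $a$ (i.e. $a<b$ and there is no $c$ with $a<c<b$), and each element of $P$ lies in at most one pair of $M$. It is acyclic if there is no cycle $b_1>a_1<b_2>a_2<\dots<b_t>a_t<b_1$ with $t\ge 2$, the $b_i$ pairwise distinct and $(a_i,b_i)\in M$ for all $i$. The critical elements of $M$ are the elements of $P$ contained in no pair of $M$. If a group $H$ acts on $P$, a matching $M$ is $H$-equivariant if $(a,b)\in M$ implies $(ha,hb)\in M$ for all $h\in H$. *)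

theory Defs
  imports "HOL-Algebra.Group_Action"
begin

text \<open>Posets are modelled as subsets S of a type with a partial order; the order on S
is the induced one.\<close>

definition covers_in :: "'a::order set \<Rightarrow> 'a \<Rightarrow> 'a \<Rightarrow> bool" where
  "covers_in S a b \<longleftrightarrow> a \<in> S \<and> b \<in> S \<and> a < b \<and> \<not> (\<exists>c\<in>S. a < c \<and> c < b)"

definition partial_matching :: "'a::order set \<Rightarrow> ('a \<times> 'a) set \<Rightarrow> bool" where
  "partial_matching S M \<longleftrightarrow>
     (\<forall>(a,b)\<in>M. covers_in S a b) \<and>
     (\<forall>p\<in>M. \<forall>q\<in>M. \<forall>x. x \<in> {fst p, snd p} \<and> x \<in> {fst q, snd q} \<longrightarrow> p = q)"

definition acyclic_matching :: "('a::order \<times> 'a) set \<Rightarrow> bool" where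
  "acyclic_matching M \<longleftrightarrow>
     \<not> (\<exists>t::nat. \<exists>a b :: nat \<Rightarrow> 'a. t \<ge> 2 \<and> inj_on b {..<t} \<and>
          (\<forall>i<t. (a i, b i) \<in> M \<and> a i < b (Suc i mod t)))"

definition critical_elems :: "'a set \<Rightarrow> ('a \<times> 'a) set \<Rightarrow> 'a set" where
  "critical_elems S M = {x \<in> S. \<forall>(a,b)\<in>M. x \<noteq> a \<and> x \<noteq> b}"

definition equivariant_matching :: "'g set \<Rightarrow> ('g \<Rightarrow> 'a \<Rightarrow> 'a) \<Rightarrow> ('a \<times> 'a) set \<Rightarrow> bool" where
  "equivariant_matching H act M \<longleftrightarrow> (\<forall>h\<in>H. \<forall>(a,b)\<in>M. (act h a, act h b) \<in> M)"

definition order_preserving_action ::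
  "('g, 'c) monoid_scheme \<Rightarrow> 'a::order set \<Rightarrow> ('g \<Rightarrow> 'a \<Rightarrow> 'a) \<Rightarrow> bool" where
  "order_preserving_action G S act \<longleftrightarrow> group_action G S act \<and>
     (\<forall>g\<in>carrier G. \<forall>x\<in>S. \<forall>y\<in>S. x \<le> y \<longrightarrow> act g x \<le> act g y)"

end

theory Submission
  imports Defs
begin

locale prop6_loc =
  fixes G :: "('g, 'c) monoid_scheme" (structure)
    and P :: "'a::order set" and Q :: "'b::order set"
    and \<alpha> :: "'g \<Rightarrow> 'a \<Rightarrow> 'a" and \<beta> :: "'g \<Rightarrow> 'b \<Rightarrow> 'b"
    and \<phi> :: "'a \<Rightarrow> 'b" and R :: "'b set"
    and M :: "'b \<Rightarrow> ('a \<times> 'a) set"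
  assumes actP: "order_preserving_action G P \<alpha>"
    and actQ: "order_preserving_action G Q \<beta>"
    and phi_maps: "\<phi> ` P \<subseteq> Q"
    and phi_mono: "\<forall>x\<in>P. \<forall>y\<in>P. x \<le> y \<longrightarrow> \<phi> x \<le> \<phi> y"
    and phi_equiv: "\<forall>g\<in>carrier G. \<forall>x\<in>P. \<phi> (\<alpha> g x) = \<beta> g (\<phi> x)"
    and R_sub: "R \<subseteq> Q"
    and R_reps: "\<forall>q\<in>Q. \<exists>!r. r \<in> R \<and> r \<in> orbit G \<beta> q"
    and M_match: "\<forall>r\<in>R. partial_matching {x\<in>P. \<phi> x = r} (M r)"
    and M_acyc: "\<forall>r\<in>R. acyclic_matching (M r)"
    and M_equiv: "\<forall>r\<in>R. equivariant_matching (stabilizer G \<beta> r) \<alpha> (M r)"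
begin

lemma gaP: "group_action G P \<alpha>" using actP unfolding order_preserving_action_def by blast
lemma gaQ: "group_action G Q \<beta>" using actQ unfolding order_preserving_action_def by blast
lemma grp: "group G" using gaP group_action.group_hom group_hom.axioms(1) by blast

lemma aP: "g \<in> carrier G \<Longrightarrow> x \<in> P \<Longrightarrow> \<alpha> g x \<in> P"
  using group_action.element_image[OF gaP] by blast
lemma aQ: "g \<in> carrier G \<Longrightarrow> x \<in> Q \<Longrightarrow> \<beta> g x \<in> Q"
  using group_action.element_image[OF gaQ] by blast
lemma compP: "x \<in> P \<Longrightarrow> g \<in> carrier G \<Longrightarrow> h \<in> carrier G \<Longrightarrow> \<alpha> (g \<otimes> h) x = \<alpha> g (\<alpha> h x)"
  using group_action.composition_rule[OF gaP] by blast
lemma compQ: "x \<in> Q \<Longrightarrow> g \<in> carrier G \<Longrightarrow> h \<in> carrier G \<Longrightarrow> \<beta> (g \<otimes> h) x = \<beta> g (\<beta> h x)"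
  using group_action.composition_rule[OF gaQ] by blast
lemma invP: "g \<in> carrier G \<Longrightarrow> x \<in> P \<Longrightarrow> \<alpha> (inv g) (\<alpha> g x) = x"
  using group_action.orbit_sym_aux[OF gaP] by blast
lemma invQ: "g \<in> carrier G \<Longrightarrow> x \<in> Q \<Longrightarrow> \<beta> (inv g) (\<beta> g x) = x"
  using group_action.orbit_sym_aux[OF gaQ] by blast
lemma invP2: "g \<in> carrier G \<Longrightarrow> x \<in> P \<Longrightarrow> \<alpha> g (\<alpha> (inv g) x) = x"
  using invP[of "inv g" x] group.inv_inv[OF grp] group.inv_closed[OF grp] by metis
lemma injP: "g \<in> carrier G \<Longrightarrow> x \<in> P \<Longrightarrow> y \<in> P \<Longrightarrow> \<alpha> g x = \<alpha> g y \<Longrightarrow> x = y"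
  using group_action.inj_prop[OF gaP] by (meson inj_on_eq_iff)
lemma monoP: "g \<in> carrier G \<Longrightarrow> x \<in> P \<Longrightarrow> y \<in> P \<Longrightarrow> x \<le> y \<Longrightarrow> \<alpha> g x \<le> \<alpha> g y"
  using actP unfolding order_preserving_action_def by blast
lemma lessP: "g \<in> carrier G \<Longrightarrow> x \<in> P \<Longrightarrow> y \<in> P \<Longrightarrow> x < y \<Longrightarrow> \<alpha> g x < \<alpha> g y"
proof -
  assume a: "g \<in> carrier G" "x \<in> P" "y \<in> P" "x < y"
  have "\<alpha> g x \<le> \<alpha> g y" using monoP a by (simp add: less_imp_le)
  moreover have "\<alpha> g x \<noteq> \<alpha> g y" using injP a by (metis less_irrefl)
  ultimately show ?thesis by simp
qed
lemma lessP_rev: "g \<in> carrier G \<Longrightarrow> x \<in> P \<Longrightarrow> y \<in> P \<Longrightarrow> \<alpha> g x < \<alpha> g y \<Longrightarrow> x < y"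
proof -
  assume a: "g \<in> carrier G" "x \<in> P" "y \<in> P" "\<alpha> g x < \<alpha> g y"
  have "\<alpha> (inv g) (\<alpha> g x) < \<alpha> (inv g) (\<alpha> g y)"
    using lessP[of "inv g" "\<alpha> g x" "\<alpha> g y"] a aP group.inv_closed[OF grp] by blast
  thus ?thesis using invP a by simp
qed
lemma invC: "g \<in> carrier G \<Longrightarrow> inv g \<in> carrier G" using group.inv_closed[OF grp] by blast
lemma mC: "g \<in> carrier G \<Longrightarrow> h \<in> carrier G \<Longrightarrow> g \<otimes> h \<in> carrier G"
  using grp group.is_monoid monoid.m_closed by fast

definition N where
  "N = {(\<alpha> g a, \<alpha> g b) | g a b r. g \<in> carrier G \<and> r \<in> R \<and> (a,b) \<in> M r}"

lemma fiber_cover: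
  assumes "covers_in {x\<in>P. \<phi> x = r} a b" shows "covers_in P a b"
proof -
  have a: "a \<in> P" "\<phi> a = r" and b: "b \<in> P" "\<phi> b = r" and ab: "a < b"
    and nc: "\<not> (\<exists>c\<in>{x\<in>P. \<phi> x = r}. a < c \<and> c < b)"
    using assms unfolding covers_in_def by auto
  have "\<not> (\<exists>c\<in>P. a < c \<and> c < b)"
  proof
    assume "\<exists>c\<in>P. a < c \<and> c < b"
    then obtain c where c: "c \<in> P" "a < c" "c < b" by blast
    have "\<phi> a \<le> \<phi> c" using phi_mono a(1) c by (simp add: less_imp_le)
    moreover have "\<phi> c \<le> \<phi> b" using phi_mono b(1) c by (simp add: less_imp_le)
    ultimately have "\<phi> c = r" using a b by (metis order.antisym)
    thus False using nc c by auto
  qed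
  thus ?thesis using a b ab unfolding covers_in_def by auto
qed

lemma Mpair:
  assumes "r \<in> R" "(a,b) \<in> M r"
  shows "a \<in> P \<and> b \<in> P \<and> \<phi> a = r \<and> \<phi> b = r \<and> covers_in P a b"
proof -
  have "covers_in {x\<in>P. \<phi> x = r} a b"
    using M_match assms unfolding partial_matching_def by fast
  thus ?thesis using fiber_cover unfolding covers_in_def by blast
qed

lemma covers_act:
  assumes "covers_in P a b" "g \<in> carrier G"
  shows "covers_in P (\<alpha> g a) (\<alpha> g b)"
proof -
  have a: "a \<in> P" and b: "b \<in> P" and ab: "a < b" and nc: "\<not> (\<exists>c\<in>P. a < c \<and> c < b)"
    using assms unfolding covers_in_def by auto
  have "\<not> (\<exists>c\<in>P. \<alpha> g a < c \<and> c < \<alpha> g b)"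
  proof
    assume "\<exists>c\<in>P. \<alpha> g a < c \<and> c < \<alpha> g b"
    then obtain c where c: "c \<in> P" "\<alpha> g a < c" "c < \<alpha> g b" by blast
    define c' where "c' = \<alpha> (inv g) c"
    have c'P: "c' \<in> P" using c'_def aP invC assms(2) c by blast
    have "\<alpha> g c' = c" using c'_def invP2 assms(2) c by blast
    hence "a < c'" "c' < b" using lessP_rev assms(2) a b c'P c by metis+
    thus False using nc c'P by blast
  qed
  thus ?thesis using aP assms(2) a b lessP ab unfolding covers_in_def by blast
qed

lemma Npair:
  assumes "(x,y) \<in> N"
  shows "x \<in> P \<and> y \<in> P \<and> \<phi> x = \<phi> y \<and> covers_in P x y"
proof -
  obtain g a b r where e: "x = \<alpha> g a" "y = \<alpha> g b" and g: "g \<in> carrier G" and r: "r \<in> R"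
    and ab: "(a,b) \<in> M r"
    using assms unfolding N_def by blast
  have m: "a \<in> P \<and> b \<in> P \<and> \<phi> a = r \<and> \<phi> b = r \<and> covers_in P a b" using Mpair r ab by blast
  thus ?thesis using e g aP phi_equiv covers_act by auto
qed

lemma RQ_unique:
  assumes "r \<in> R" "r' \<in> R" "h \<in> carrier G" "\<beta> h r' = r"
  shows "r = r'"
proof -
  have rQ: "r \<in> Q" "r' \<in> Q" using assms R_sub by auto
  have "r \<in> orbit G \<beta> r" using group_action.orbit_refl[OF gaQ] rQ by blast
  moreover have "\<beta> (inv h) r = r'" using invQ assms rQ by blast
  hence "r' \<in> orbit G \<beta> r" unfolding orbit_def using invC assms(3) by blast
  ultimately show ?thesis using R_reps rQ assms by blast
qed

lemma rep_exists:
  assumes "q \<in> Q" shows "\<exists>h\<in>carrier G. \<beta> h q \<in> R"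
proof -
  obtain r where "r \<in> R" "r \<in> orbit G \<beta> q" using R_reps assms by blast
  thus ?thesis unfolding orbit_def by blast
qed

lemma pull:
  assumes "(x,y) \<in> N" "g \<in> carrier G" "r \<in> R" "\<beta> g (\<phi> x) = r"
  shows "(\<alpha> g x, \<alpha> g y) \<in> M r"
proof -
  obtain g' a b r' where e: "x = \<alpha> g' a" "y = \<alpha> g' b" and g': "g' \<in> carrier G" and r': "r' \<in> R"
    and ab: "(a,b) \<in> M r'"
    using assms unfolding N_def by blast
  have m: "a \<in> P \<and> b \<in> P \<and> \<phi> a = r' \<and> \<phi> b = r'" using Mpair r' ab by blast
  have "\<phi> x = \<beta> g' r'" using e m phi_equiv g' by auto
  hence "\<beta> (g \<otimes> g') r' = r" using compQ assms(2,4) g' r' R_sub by auto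
  hence rr: "r = r'" using RQ_unique assms(3) r' mC assms(2) g' by blast
  have st: "g \<otimes> g' \<in> stabilizer G \<beta> r"
    unfolding stabilizer_def using \<open>\<beta> (g \<otimes> g') r' = r\<close> rr mC assms(2) g' by auto
  have "(\<alpha> (g \<otimes> g') a, \<alpha> (g \<otimes> g') b) \<in> M r"
    using M_equiv assms(3) st ab rr unfolding equivariant_matching_def by fast
  thus ?thesis using compP e m assms(2) g' by auto
qed

lemma N_equiv: "equivariant_matching (carrier G) \<alpha> N"
  unfolding equivariant_matching_def
proof (intro ballI, clarify)
  fix h x y assume h: "h \<in> carrier G" and xy: "(x,y) \<in> N"
  obtain g a b r where e: "x = \<alpha> g a" "y = \<alpha> g b" and g: "g \<in> carrier G" and r: "r \<in> R"
    and ab: "(a,b) \<in> M r"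
    using xy unfolding N_def by blast
  have m: "a \<in> P \<and> b \<in> P" using Mpair r ab by blast
  have "\<alpha> h x = \<alpha> (h \<otimes> g) a" "\<alpha> h y = \<alpha> (h \<otimes> g) b" using compP e m h g by auto
  thus "(\<alpha> h x, \<alpha> h y) \<in> N" unfolding N_def using mC h g r ab by blast
qed

lemma N_match: "partial_matching P N"
  unfolding partial_matching_def
proof (intro conjI)
  show "\<forall>(a, b)\<in>N. covers_in P a b" using Npair by blast
  show "\<forall>p\<in>N. \<forall>q\<in>N. \<forall>x. x \<in> {fst p, snd p} \<and> x \<in> {fst q, snd q} \<longrightarrow> p = q"
  proof (intro ballI allI impI)
    fix p q x assume p: "p \<in> N" and q: "q \<in> N" and x: "x \<in> {fst p, snd p} \<and> x \<in> {fst q, snd q}"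
    obtain x1 y1 where p': "p = (x1,y1)" by (cases p)
    obtain x2 y2 where q': "q = (x2,y2)" by (cases q)
    have n1: "x1 \<in> P \<and> y1 \<in> P \<and> \<phi> x1 = \<phi> y1" using Npair p p' by blast
    have n2: "x2 \<in> P \<and> y2 \<in> P \<and> \<phi> x2 = \<phi> y2" using Npair q q' by blast
    have xP: "x \<in> P" and e1: "\<phi> x1 = \<phi> x" and e2: "\<phi> x2 = \<phi> x" using x p' q' n1 n2 by auto
    have "\<phi> x \<in> Q" using xP phi_maps by blast
    then obtain h where h: "h \<in> carrier G" "\<beta> h (\<phi> x) \<in> R" using rep_exists by blast
    define r where "r = \<beta> h (\<phi> x)"
    have m1: "(\<alpha> h x1, \<alpha> h y1) \<in> M r" using pull p p' h e1 r_def by auto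
    have m2: "(\<alpha> h x2, \<alpha> h y2) \<in> M r" using pull q q' h e2 r_def by auto
    have "\<alpha> h x \<in> {fst (\<alpha> h x1, \<alpha> h y1), snd (\<alpha> h x1, \<alpha> h y1)}
        \<and> \<alpha> h x \<in> {fst (\<alpha> h x2, \<alpha> h y2), snd (\<alpha> h x2, \<alpha> h y2)}" using x p' q' by auto
    hence "(\<alpha> h x1, \<alpha> h y1) = (\<alpha> h x2, \<alpha> h y2)"
      using M_match h(2) m1 m2 r_def unfolding partial_matching_def by blast
    thus "p = q" using injP h(1) n1 n2 p' q' by auto
  qed
qed

lemma N_acyclic: "acyclic_matching N"
  unfolding acyclic_matching_def
proof
  assume "\<exists>t a b. 2 \<le> t \<and> inj_on b {..<t} \<and> (\<forall>i<t. (a i, b i) \<in> N \<and> a i < b (Suc i mod t))"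
  then obtain t a b where t: "2 \<le> t" and inj: "inj_on b {..<t}"
    and cyc: "\<forall>i<t. (a i, b i) \<in> N \<and> a i < b (Suc i mod t)" by blast
  define f where "f i = \<phi> (a (i mod t))" for i
  have tpos: "0 < t" using t by simp
  have step: "f i \<le> f (Suc i)" for i
  proof -
    define j where "j = i mod t"
    define k where "k = Suc j mod t"
    have j: "j < t" using tpos j_def by simp
    have k: "k < t" using tpos k_def by simp
    have kk: "k = Suc i mod t" using k_def j_def by (simp add: mod_Suc_eq)
    have 1: "(a j, b j) \<in> N" "a j < b k" using cyc j unfolding k_def by blast+
    have 2: "(a k, b k) \<in> N" using cyc k by blast
    have "a j \<in> P" "b k \<in> P" using Npair[OF 1(1)] Npair[OF 2] by blast+
    hence "\<phi> (a j) \<le> \<phi> (b k)" using phi_mono less_imp_le[OF 1(2)] by blast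
    also have "\<phi> (b k) = \<phi> (a k)" using Npair[OF 2] by simp
    finally show ?thesis unfolding f_def j_def[symmetric] kk[symmetric] .
  qed
  have mono: "f i \<le> f (i + d)" for i d
  proof (induction d)
    case 0 show ?case by simp
  next
    case (Suc d) thus ?case using step[of "i + d"] by simp
  qed
  have eq: "\<phi> (a i) = \<phi> (a 0)" if i: "i < t" for i
  proof -
    have "f 0 \<le> f i" using mono[of 0 i] by simp
    moreover have "f i \<le> f t" using mono[of i "t - i"] i by simp
    ultimately show ?thesis unfolding f_def using i by auto
  qed
  have "(a 0, b 0) \<in> N" using cyc tpos by blast
  hence a0: "a 0 \<in> P" using Npair by blast
  hence "\<phi> (a 0) \<in> Q" using phi_maps by blast
  then obtain h where h: "h \<in> carrier G" "\<beta> h (\<phi> (a 0)) \<in> R" using rep_exists by blast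
  define r where "r = \<beta> h (\<phi> (a 0))"
  have H: "2 \<le> t \<and> inj_on (\<lambda>i. \<alpha> h (b i)) {..<t} \<and>
     (\<forall>i<t. (\<alpha> h (a i), \<alpha> h (b i)) \<in> M r \<and> \<alpha> h (a i) < \<alpha> h (b (Suc i mod t)))"
  proof (intro conjI allI impI)
    show "2 \<le> t" by fact
    show "inj_on (\<lambda>i. \<alpha> h (b i)) {..<t}"
    proof (rule inj_onI)
      fix i j assume ij: "i \<in> {..<t}" "j \<in> {..<t}" "\<alpha> h (b i) = \<alpha> h (b j)"
      hence "(a i, b i) \<in> N" "(a j, b j) \<in> N" using cyc by blast+
      hence "b i \<in> P" "b j \<in> P" using Npair by blast+
      hence "b i = b j" using injP h(1) ij by blast
      thus "i = j" using inj ij unfolding inj_on_def by blast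
    qed
    fix i assume i: "i < t"
    have ci: "(a i, b i) \<in> N" "a i < b (Suc i mod t)" using cyc i by blast+
    have "\<beta> h (\<phi> (a i)) = r" using eq[OF i] r_def by simp
    moreover have "r \<in> R" using h(2) r_def by simp
    ultimately show "(\<alpha> h (a i), \<alpha> h (b i)) \<in> M r" using pull[OF ci(1) h(1)] by blast
    have s: "Suc i mod t < t" using tpos by simp
    hence "(a (Suc i mod t), b (Suc i mod t)) \<in> N" using cyc by blast
    hence "b (Suc i mod t) \<in> P" using Npair by blast
    moreover have "a i \<in> P" using Npair ci by blast
    ultimately show "\<alpha> h (a i) < \<alpha> h (b (Suc i mod t))"
      using lessP h(1) ci(2) by blast
  qed
  have "\<exists>t a b. 2 \<le> t \<and> inj_on b {..<t} \<and> (\<forall>i<t. (a i, b i) \<in> M r \<and> a i < b (Suc i mod t))"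
    by (rule exI[of _ t], rule exI[of _ "\<lambda>i. \<alpha> h (a i)"], rule exI[of _ "\<lambda>i. \<alpha> h (b i)"], fact H)
  moreover have "acyclic_matching (M r)" using M_acyc h(2) r_def by blast
  ultimately show False unfolding acyclic_matching_def by blast
qed

lemma N_crit: "critical_elems P N =
  (\<Union>g\<in>carrier G. \<Union>r\<in>R. \<alpha> g ` critical_elems {x\<in>P. \<phi> x = r} (M r))"
proof
  show "critical_elems P N \<subseteq> (\<Union>g\<in>carrier G. \<Union>r\<in>R. \<alpha> g ` critical_elems {x\<in>P. \<phi> x = r} (M r))"
  proof
    fix x assume "x \<in> critical_elems P N"
    hence xP: "x \<in> P" and xc: "\<forall>(a,b)\<in>N. x \<noteq> a \<and> x \<noteq> b" unfolding critical_elems_def by auto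
    have "\<phi> x \<in> Q" using xP phi_maps by blast
    then obtain h where h: "h \<in> carrier G" "\<beta> h (\<phi> x) \<in> R" using rep_exists by blast
    define r where "r = \<beta> h (\<phi> x)"
    define c where "c = \<alpha> h x"
    have cP: "c \<in> P" "\<phi> c = r" using c_def r_def aP h xP phi_equiv by auto
    have cc: "\<forall>(a,b)\<in>M r. c \<noteq> a \<and> c \<noteq> b"
    proof (clarify)
      fix a b assume ab: "(a,b) \<in> M r"
      have m: "a \<in> P \<and> b \<in> P" using Mpair ab h(2) r_def by blast
      have inN: "(\<alpha> (inv h) a, \<alpha> (inv h) b) \<in> N"
        unfolding N_def using invC h ab r_def by blast
      have "x = \<alpha> (inv h) c" using c_def invP h xP by auto
      thus "c \<noteq> a \<and> c \<noteq> b" using xc inN by auto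
    qed
    have "c \<in> critical_elems {x\<in>P. \<phi> x = r} (M r)" unfolding critical_elems_def using cP cc by auto
    moreover have "x = \<alpha> (inv h) c" using c_def invP h xP by auto
    ultimately show "x \<in> (\<Union>g\<in>carrier G. \<Union>r\<in>R. \<alpha> g ` critical_elems {x\<in>P. \<phi> x = r} (M r))"
      using invC h r_def by blast
  qed
  show "(\<Union>g\<in>carrier G. \<Union>r\<in>R. \<alpha> g ` critical_elems {x\<in>P. \<phi> x = r} (M r)) \<subseteq> critical_elems P N"
  proof clarify
    fix g r c assume g: "g \<in> carrier G" and r: "r \<in> R" and c: "c \<in> critical_elems {x\<in>P. \<phi> x = r} (M r)"
    have cP: "c \<in> P" "\<phi> c = r" and cc: "\<forall>(a,b)\<in>M r. c \<noteq> a \<and> c \<noteq> b"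
      using c unfolding critical_elems_def by auto
    have xP: "\<alpha> g c \<in> P" using aP g cP by blast
    have "\<forall>(a,b)\<in>N. \<alpha> g c \<noteq> a \<and> \<alpha> g c \<noteq> b"
    proof clarify
      fix a b assume ab: "(a,b) \<in> N"
      have n: "a \<in> P \<and> b \<in> P \<and> \<phi> a = \<phi> b" using Npair ab by blast
      show "\<alpha> g c \<noteq> a \<and> \<alpha> g c \<noteq> b"
      proof (rule ccontr)
        assume "\<not> (\<alpha> g c \<noteq> a \<and> \<alpha> g c \<noteq> b)"
        hence h: "\<alpha> g c = a \<or> \<alpha> g c = b" by blast
        have "\<phi> (\<alpha> g c) = \<beta> g r" using phi_equiv g cP by auto
        hence "\<beta> (inv g) (\<phi> a) = r" using h n invQ g r R_sub by auto
        hence m: "(\<alpha> (inv g) a, \<alpha> (inv g) b) \<in> M r" using pull ab invC g r by blast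
        have "\<alpha> (inv g) (\<alpha> g c) = c" using invP g cP by blast
        thus False using m cc h by auto
      qed
    qed
    thus "\<alpha> g c \<in> critical_elems P N" unfolding critical_elems_def using xP by auto
  qed
qed

lemma part1: "\<exists>N. partial_matching P N \<and> acyclic_matching N \<and>
            equivariant_matching (carrier G) \<alpha> N \<and>
            critical_elems P N =
              (\<Union>g\<in>carrier G. \<Union>r\<in>R. \<alpha> g ` critical_elems {x\<in>P. \<phi> x = r} (M r))"
  using N_match N_acyclic N_equiv N_crit by blast

lemma part2: "\<forall>r\<in>R.
              (\<forall>x\<in>critical_elems {x\<in>P. \<phi> x = r} (M r).
                 \<forall>y\<in>critical_elems {x\<in>P. \<phi> x = r} (M r).
                   \<exists>h\<in>stabilizer G \<beta> r. \<alpha> h x = y)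
              \<longrightarrow> (\<forall>x\<in>(\<Union>g\<in>carrier G. \<alpha> g ` critical_elems {x\<in>P. \<phi> x = r} (M r)).
                     \<forall>y\<in>(\<Union>g\<in>carrier G. \<alpha> g ` critical_elems {x\<in>P. \<phi> x = r} (M r)).
                       \<exists>g\<in>carrier G. \<alpha> g x = y)"
proof (intro ballI impI)
  fix r x y
  assume tr: "\<forall>x\<in>critical_elems {x\<in>P. \<phi> x = r} (M r).
                 \<forall>y\<in>critical_elems {x\<in>P. \<phi> x = r} (M r).
                   \<exists>h\<in>stabilizer G \<beta> r. \<alpha> h x = y"
    and x: "x \<in> (\<Union>g\<in>carrier G. \<alpha> g ` critical_elems {x\<in>P. \<phi> x = r} (M r))"
    and y: "y \<in> (\<Union>g\<in>carrier G. \<alpha> g ` critical_elems {x\<in>P. \<phi> x = r} (M r))"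
  obtain g c where g: "g \<in> carrier G" and c: "c \<in> critical_elems {x\<in>P. \<phi> x = r} (M r)" and xe: "x = \<alpha> g c"
    using x by blast
  obtain g' c' where g': "g' \<in> carrier G" and c': "c' \<in> critical_elems {x\<in>P. \<phi> x = r} (M r)" and ye: "y = \<alpha> g' c'"
    using y by blast
  obtain h where h: "h \<in> stabilizer G \<beta> r" "\<alpha> h c = c'" using tr c c' by blast
  have hC: "h \<in> carrier G" using h unfolding stabilizer_def by auto
  have cP: "c \<in> P" using c unfolding critical_elems_def by auto
  define k where "k = g' \<otimes> (h \<otimes> inv g)"
  have kC: "k \<in> carrier G" using k_def mC invC g g' hC by blast
  have "\<alpha> k x = \<alpha> g' (\<alpha> h (\<alpha> (inv g) (\<alpha> g c)))"
  proof -
    have xP: "x \<in> P" using xe aP g cP by blast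
    have igC: "inv g \<in> carrier G" using invC g by blast
    have "\<alpha> k x = \<alpha> g' (\<alpha> (h \<otimes> inv g) x)"
      using k_def compP xP g' mC hC igC by blast
    also have "\<dots> = \<alpha> g' (\<alpha> h (\<alpha> (inv g) x))" using compP xP hC igC by simp
    finally show ?thesis using xe by simp
  qed
  also have "\<dots> = y" using invP g cP h ye by simp
  finally show "\<exists>g\<in>carrier G. \<alpha> g x = y" using kC by blast
qed

end

theorem proposition6:
  fixes G :: "('g, 'c) monoid_scheme"
    and P :: "'a::order set" and Q :: "'b::order set"
    and \<alpha> :: "'g \<Rightarrow> 'a \<Rightarrow> 'a" and \<beta> :: "'g \<Rightarrow> 'b \<Rightarrow> 'b"
    and \<phi> :: "'a \<Rightarrow> 'b" and R :: "'b set"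
    and M :: "'b \<Rightarrow> ('a \<times> 'a) set"
  assumes actP: "order_preserving_action G P \<alpha>"
    and actQ: "order_preserving_action G Q \<beta>"
    and phi_maps: "\<phi> ` P \<subseteq> Q"
    and phi_mono: "\<forall>x\<in>P. \<forall>y\<in>P. x \<le> y \<longrightarrow> \<phi> x \<le> \<phi> y"
    and phi_equiv: "\<forall>g\<in>carrier G. \<forall>x\<in>P. \<phi> (\<alpha> g x) = \<beta> g (\<phi> x)"
    and R_sub: "R \<subseteq> Q"
    and R_reps: "\<forall>q\<in>Q. \<exists>!r. r \<in> R \<and> r \<in> orbit G \<beta> q"
    and M_match: "\<forall>r\<in>R. partial_matching {x\<in>P. \<phi> x = r} (M r)"
    and M_acyc: "\<forall>r\<in>R. acyclic_matching (M r)"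
    and M_equiv: "\<forall>r\<in>R. equivariant_matching (stabilizer G \<beta> r) \<alpha> (M r)"
  shows "(\<exists>N. partial_matching P N \<and> acyclic_matching N \<and>
            equivariant_matching (carrier G) \<alpha> N \<and>
            critical_elems P N =
              (\<Union>g\<in>carrier G. \<Union>r\<in>R. \<alpha> g ` critical_elems {x\<in>P. \<phi> x = r} (M r)))
         \<and> (\<forall>r\<in>R.
              (\<forall>x\<in>critical_elems {x\<in>P. \<phi> x = r} (M r).
                 \<forall>y\<in>critical_elems {x\<in>P. \<phi> x = r} (M r).
                   \<exists>h\<in>stabilizer G \<beta> r. \<alpha> h x = y)
              \<longrightarrow> (\<forall>x\<in>(\<Union>g\<in>carrier G. \<alpha> g ` critical_elems {x\<in>P. \<phi> x = r} (M r)).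
                     \<forall>y\<in>(\<Union>g\<in>carrier G. \<alpha> g ` critical_elems {x\<in>P. \<phi> x = r} (M r)).
                       \<exists>g\<in>carrier G. \<alpha> g x = y))"
proof -
  interpret L: prop6_loc G P Q \<alpha> \<beta> \<phi> R M
    using assms by (unfold_locales) auto
  show ?thesis using L.part1 L.part2 by blast
qed

end
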